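(* For every integer $n\ge 2$, $$\operatorname{op}_{n,n-1}(123) = (n-1)\,\operatorname{op}_{[2,\underbrace{1,\dots,1}_{n-2}]}(123).$$
   Context: An ordered set partition of $[N]$ into $k$ blocks is a sequence $B_1/B_2/\cdots/B_k$ of nonempty, pairwise disjoint subsets of $[N]$ whose union is $[N]$; the order of the blocks matters, but not the order of elements within a block. For a permutation $\rho=\rho_1\cdots\rho_m\in\mathcal{S}_m$, an ordered partition $B_1/\cdots/B_k$ contains $\rho$ if there are block indices $i_1<i_2<\cdots<i_m$ and elements $b_j\in B_{i_j}$ such that $b_1\cdots b_m$ is order-isomorphic to $\rho$; otherwise it avoids $\rho$. $\operatorname{op}_{n,k}(\rho)$ is the number of $\rho$-avoiding ordered partitions of $[n]$ into $k$ blocks, and for positive integers $b_1,\dots,b_k$, $\operatorname{op}_{[b_1,\dots,b_k]}(\rho)$ is the number of $\rho$-avoiding ordered partitions $B_1/\cdots/B_k$ of $[b_1+\cdots+b_k]$ with $|B_i|=b_i$ for all $i$. *)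

theory Defs
  imports Main
begin

definition ordered_set_partition :: "nat \<Rightarrow> nat set list \<Rightarrow> bool" where
  "ordered_set_partition N bs \<longleftrightarrow>
     (\<forall>i < length bs. bs ! i \<noteq> {}) \<and>
     (\<forall>i < length bs. \<forall>j < length bs. i \<noteq> j \<longrightarrow> bs ! i \<inter> bs ! j = {}) \<and>
     (\<Union> (set bs)) = {1..N}"

definition op_contains :: "nat set list \<Rightarrow> nat list \<Rightarrow> bool" where
  "op_contains bs \<rho> \<longleftrightarrow>
     (\<exists>idx :: nat \<Rightarrow> nat. \<exists>b :: nat \<Rightarrow> nat.
        (\<forall>j < length \<rho>. idx j < length bs \<and> b j \<in> bs ! (idx j)) \<and>
        (\<forall>j < length \<rho>. \<forall>l < length \<rho>. j < l \<longrightarrow> idx j < idx l) \<and>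
        (\<forall>j < length \<rho>. \<forall>l < length \<rho>. b j < b l \<longleftrightarrow> \<rho> ! j < \<rho> ! l))"

definition op_avoids :: "nat set list \<Rightarrow> nat list \<Rightarrow> bool" where
  "op_avoids bs \<rho> \<longleftrightarrow> \<not> op_contains bs \<rho>"

definition op_nk :: "nat \<Rightarrow> nat \<Rightarrow> nat list \<Rightarrow> nat" where
  "op_nk n k \<rho> = card {bs. ordered_set_partition n bs \<and> length bs = k \<and> op_avoids bs \<rho>}"

definition op_sizes :: "nat list \<Rightarrow> nat list \<Rightarrow> nat" where
  "op_sizes bl \<rho> = card {bs. ordered_set_partition (sum_list bl) bs \<and> length bs = length bl \<and>
       (\<forall>i < length bl. card (bs ! i) = bl ! i) \<and> op_avoids bs \<rho>}"

end

theory Submission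
  imports Defs
begin

definition contains3 :: "nat set list \<Rightarrow> bool" where
  "contains3 bs \<longleftrightarrow> (\<exists>i1 i2 i3 x y z. i1 < i2 \<and> i2 < i3 \<and> i3 < length bs \<and>
     x \<in> bs!i1 \<and> y \<in> bs!i2 \<and> z \<in> bs!i3 \<and> x < y \<and> y < z)"

lemma all3: "(\<forall>j<(3::nat). P j) = (P 0 \<and> P 1 \<and> P 2)"
  by (auto simp: less_Suc_eq numeral_3_eq_3 numeral_2_eq_2)

lemma contains_iff: "op_contains bs [1,2,3] \<longleftrightarrow> contains3 bs"
proof
  assume "op_contains bs [1,2,3]"
  then obtain idx b where h1: "\<forall>j<length [1,2,3::nat]. idx j < length bs \<and> b j \<in> bs ! (idx j)"
    and h2: "\<forall>j<length [1,2,3::nat]. \<forall>l<length [1,2,3::nat]. j < l \<longrightarrow> idx j < idx l"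
    and h3: "\<forall>j<length [1,2,3::nat]. \<forall>l<length [1,2,3::nat]. b j < b l \<longleftrightarrow> [1,2,3::nat] ! j < [1,2,3] ! l"
    unfolding op_contains_def by blast
  show "contains3 bs" unfolding contains3_def
    apply (rule exI[of _ "idx 0"], rule exI[of _ "idx 1"], rule exI[of _ "idx 2"])
    apply (rule exI[of _ "b 0"], rule exI[of _ "b 1"], rule exI[of _ "b 2"])
    using h1 h2 h3 by (simp add: all3)
next
  assume "contains3 bs"
  then obtain i1 i2 i3 x y z where h: "i1 < i2 \<and> i2 < i3 \<and> i3 < length bs \<and>
     x \<in> bs!i1 \<and> y \<in> bs!i2 \<and> z \<in> bs!i3 \<and> x < y \<and> y < z"
    unfolding contains3_def by blast
  show "op_contains bs [1,2,3]" unfolding op_contains_def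
    apply (rule exI[of _ "\<lambda>j. if j = 0 then i1 else if j = 1 then i2 else i3"])
    apply (rule exI[of _ "\<lambda>j. if j = 0 then x else if j = 1 then y else z"])
    using h by (simp add: all3)
qed

lemma transfer:
  assumes len: "length bs' = length bs" and si: "Suc i < length bs"
  and same: "\<forall>k<length bs. k \<noteq> i \<longrightarrow> k \<noteq> Suc i \<longrightarrow> bs'!k = bs!k"
  and U: "bs!i \<union> bs!Suc i \<subseteq> bs'!i \<union> bs'!Suc i"
  and P1: "\<forall>w. (\<exists>p\<in>bs!i. \<exists>q\<in>bs!Suc i. p<q \<and> w<p) \<longrightarrow> (\<exists>p\<in>bs'!i. \<exists>q\<in>bs'!Suc i. p<q \<and> w<p)"
  and P2: "\<forall>w. (\<exists>p\<in>bs!i. \<exists>q\<in>bs!Suc i. p<q \<and> q<w) \<longrightarrow> (\<exists>p\<in>bs'!i. \<exists>q\<in>bs'!Suc i. p<q \<and> q<w)"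
  and c: "contains3 bs"
  shows "contains3 bs'"
proof -
  obtain i1 i2 i3 x y z where h: "i1 < i2" "i2 < i3" "i3 < length bs"
     "x \<in> bs!i1" "y \<in> bs!i2" "z \<in> bs!i3" "x < y" "y < z"
    using c unfolding contains3_def by blast
  have W: "\<exists>k'. (k' = i \<or> k' = Suc i) \<and> v \<in> bs'!k'" if "v \<in> bs!k" "k = i \<or> k = Suc i" for v k
    using U that by blast
  have wit: "contains3 bs'" if "j1 < j2" "j2 < j3" "j3 < length bs" "x \<in> bs'!j1" "y \<in> bs'!j2" "z \<in> bs'!j3" for j1 j2 j3
    unfolding contains3_def using that h len by metis
  consider (a) "i1 \<noteq> i \<and> i1 \<noteq> Suc i \<and> i2 \<noteq> i \<and> i2 \<noteq> Suc i \<and> i3 \<noteq> i \<and> i3 \<noteq> Suc i"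
    | (b) "i1 = i \<and> i2 = Suc i" | (c) "i2 = i \<and> i3 = Suc i"
    | (d1) "(i1 = i \<or> i1 = Suc i) \<and> i2 \<noteq> i \<and> i2 \<noteq> Suc i \<and> i3 \<noteq> i \<and> i3 \<noteq> Suc i"
    | (d2) "(i2 = i \<or> i2 = Suc i) \<and> i1 \<noteq> i \<and> i1 \<noteq> Suc i \<and> i3 \<noteq> i \<and> i3 \<noteq> Suc i"
    | (d3) "(i3 = i \<or> i3 = Suc i) \<and> i2 \<noteq> i \<and> i2 \<noteq> Suc i \<and> i1 \<noteq> i \<and> i1 \<noteq> Suc i"
    using h by linarith
  then show ?thesis
  proof cases
    case a then show ?thesis using wit[of i1 i2 i3] h same by auto
  next
    case b
    then obtain p q where pq: "p \<in> bs'!i" "q \<in> bs'!Suc i" "p < q" "q < z"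
      using P2 h by blast
    show ?thesis unfolding contains3_def
      apply (rule exI[of _ i], rule exI[of _ "Suc i"], rule exI[of _ i3])
      apply (rule exI[of _ p], rule exI[of _ q], rule exI[of _ z])
      using pq b h same len by auto
  next
    case c
    then obtain p q where pq: "p \<in> bs'!i" "q \<in> bs'!Suc i" "p < q" "x < p"
      using P1 h by blast
    show ?thesis unfolding contains3_def
      apply (rule exI[of _ i1], rule exI[of _ i], rule exI[of _ "Suc i"])
      apply (rule exI[of _ x], rule exI[of _ p], rule exI[of _ q])
      using pq c h same len by auto
  next
    case d1
    then obtain k' where k: "k' = i \<or> k' = Suc i" "x \<in> bs'!k'" using W h by blast
    show ?thesis using wit[of k' i2 i3] k d1 h same by auto
  next
    case d2
    then obtain k' where k: "k' = i \<or> k' = Suc i" "y \<in> bs'!k'" using W h by blast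
    show ?thesis using wit[of i1 k' i3] k d2 h same by auto
  next
    case d3
    then obtain k' where k: "k' = i \<or> k' = Suc i" "z \<in> bs'!k'" using W h by blast
    show ?thesis using wit[of i1 i2 k'] k d3 h same si by auto
  qed
qed



lemma union_nth: "\<Union>(set xs) = (\<Union>k<length xs. xs!k)"
  by (auto simp: set_conv_nth)

lemma window:
  assumes osp: "ordered_set_partition n bs" and si: "Suc i < length bs"
  and X: "X \<noteq> {}" and Y: "Y \<noteq> {}" and XYd: "X \<inter> Y = {}"
  and XY: "X \<union> Y = bs!i \<union> bs!Suc i"
  and Q1: "\<forall>w. (\<exists>p\<in>bs!i. \<exists>q\<in>bs!Suc i. p<q \<and> w<p) \<longleftrightarrow> (\<exists>p\<in>X. \<exists>q\<in>Y. p<q \<and> w<p)"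
  and Q2: "\<forall>w. (\<exists>p\<in>bs!i. \<exists>q\<in>bs!Suc i. p<q \<and> q<w) \<longleftrightarrow> (\<exists>p\<in>X. \<exists>q\<in>Y. p<q \<and> q<w)"
  shows "ordered_set_partition n (bs[i:=X, Suc i:=Y]) \<and> (contains3 (bs[i:=X, Suc i:=Y]) \<longleftrightarrow> contains3 bs)"
proof -
  let ?b = "bs[i:=X, Suc i:=Y]"
  have len: "length ?b = length bs" by simp
  have nth: "?b!k = (if k = Suc i then Y else if k = i then X else bs!k)" if "k < length bs" for k
    using that si by auto
  have ne: "\<forall>k<length bs. bs!k \<noteq> {}" and dj: "\<forall>j<length bs. \<forall>k<length bs. j \<noteq> k \<longrightarrow> bs!j \<inter> bs!k = {}"
    and un: "\<Union>(set bs) = {1..n}" using osp unfolding ordered_set_partition_def by auto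
  have o1: "\<forall>k<length ?b. ?b!k \<noteq> {}" using ne nth X Y by auto
  have o2: "\<forall>j<length ?b. \<forall>k<length ?b. j \<noteq> k \<longrightarrow> ?b!j \<inter> ?b!k = {}"
  proof (intro allI impI)
    fix j k assume j: "j < length ?b" and k: "k < length ?b" and jk: "j \<noteq> k"
    have sub: "?b!l \<subseteq> bs!i \<union> bs!Suc i" if "l = i \<or> l = Suc i" "l < length bs" for l
      using that nth XY by auto
    show "?b!j \<inter> ?b!k = {}"
    proof (cases "j = i \<or> j = Suc i")
      case True
      show ?thesis
      proof (cases "k = i \<or> k = Suc i")
        case True
        then show ?thesis using \<open>j = i \<or> j = Suc i\<close> jk XYd nth j k by auto
      next
        case False
        have "bs!i \<inter> bs!k = {}" "bs!Suc i \<inter> bs!k = {}" using dj False k si by auto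
        then show ?thesis using sub[of j] True j k nth False by auto
      qed
    next
      case False
      show ?thesis
      proof (cases "k = i \<or> k = Suc i")
        case True
        have "bs!i \<inter> bs!j = {}" "bs!Suc i \<inter> bs!j = {}" using dj False j si by auto
        then show ?thesis using sub[of k] True j k nth False by auto
      next
        case False
        then show ?thesis using \<open>\<not> (j = i \<or> j = Suc i)\<close> dj nth j k jk by auto
      qed
    qed
  qed
  have o3: "\<Union>(set ?b) = {1..n}"
  proof -
    have "(\<Union>k<length ?b. ?b!k) = (\<Union>k<length bs. bs!k)"
    proof
      show "(\<Union>k<length ?b. ?b!k) \<subseteq> (\<Union>k<length bs. bs!k)"
      proof
        fix x assume "x \<in> (\<Union>k<length ?b. ?b!k)"
        then obtain k where k: "k < length bs" "x \<in> ?b!k" by auto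
        show "x \<in> (\<Union>k<length bs. bs!k)"
        proof (cases "k = i \<or> k = Suc i")
          case True
          then have "x \<in> bs!i \<or> x \<in> bs!Suc i" using k nth XY by (auto split: if_splits)
          then show ?thesis using si by auto
        next
          case False then show ?thesis using k nth by auto
        qed
      qed
    next
      show "(\<Union>k<length bs. bs!k) \<subseteq> (\<Union>k<length ?b. ?b!k)"
      proof
        fix x assume "x \<in> (\<Union>k<length bs. bs!k)"
        then obtain k where k: "k < length bs" "x \<in> bs!k" by auto
        show "x \<in> (\<Union>k<length ?b. ?b!k)"
        proof (cases "k = i \<or> k = Suc i")
          case True
          then have "x \<in> X \<or> x \<in> Y" using k XY by auto
          then have "x \<in> ?b!i \<or> x \<in> ?b!Suc i" using si nth by auto
          moreover have "i < length ?b" "Suc i < length ?b" using si by auto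
          ultimately show ?thesis by blast
        next
          case False then show ?thesis using k nth by (auto intro!: bexI[of _ k])
        qed
      qed
    qed
    then show ?thesis using un by (simp only: union_nth)
  qed
  have t1: "contains3 ?b" if "contains3 bs"
    apply (rule transfer[of ?b bs i])
    using that si nth XY Q1 Q2 by auto
  have t2: "contains3 bs" if "contains3 ?b"
    apply (rule transfer[of bs ?b i])
    using that si nth XY Q1 Q2 by auto
  show ?thesis using o1 o2 o3 t1 t2 unfolding ordered_set_partition_def by blast
qed



lemma struct:
  assumes osp: "ordered_set_partition n bs" and len: "length bs = m" and nm: "n = Suc m"
  shows "\<exists>i<m. card (bs!i) = 2"
    and "\<forall>i<m. \<forall>j<m. card (bs!i) = 2 \<longrightarrow> j \<noteq> i \<longrightarrow> card (bs!j) = 1"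
    and "\<forall>k<m. finite (bs!k) \<and> bs!k \<noteq> {}"
proof -
  have ne: "\<forall>k<length bs. bs!k \<noteq> {}" and dj: "\<forall>j<length bs. \<forall>k<length bs. j \<noteq> k \<longrightarrow> bs!j \<inter> bs!k = {}"
    and un: "(\<Union>k<m. bs!k) = {1..n}" using osp len unfolding ordered_set_partition_def union_nth by auto
  have fin: "\<forall>k<m. finite (bs!k) \<and> bs!k \<noteq> {}"
  proof (intro allI impI conjI)
    fix k assume k: "k < m"
    have "bs!k \<subseteq> {1..n}" using un k by blast
    then show "finite (bs!k)" using finite_subset by blast
    show "bs!k \<noteq> {}" using ne k len by auto
  qed
  then show "\<forall>k<m. finite (bs!k) \<and> bs!k \<noteq> {}" .
  have "card (\<Union>k<m. bs!k) = (\<Sum>k<m. card (bs!k))"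
    by (rule card_UN_disjoint) (use fin dj len in auto)
  then have s: "(\<Sum>k<m. card (bs!k)) = Suc m" using un nm by simp
  have pos: "\<forall>k<m. 1 \<le> card (bs!k)" using fin by (simp add: Suc_le_eq card_gt_0_iff)
  define g where "g k = card (bs!k) - 1" for k
  have "(\<Sum>k<m. g k) = (\<Sum>k<m. card (bs!k)) - (\<Sum>k<m. (1::nat))"
    unfolding g_def by (rule sum_subtractf_nat) (use pos in auto)
  then have gs: "(\<Sum>k<m. g k) = 1" using s by simp
  have gle: "g k \<le> 1" if "k < m" for k
    using member_le_sum[of k "{..<m}" g] that gs by simp
  have two: "False" if "i < m" "j < m" "i \<noteq> j" "g i = 1" "g j = 1" for i j
  proof -
    have "(\<Sum>k\<in>{i,j}. g k) \<le> (\<Sum>k<m. g k)" by (rule sum_mono2) (use that in auto)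
    then show False using that gs by simp
  qed
  obtain i where i: "i < m" "g i \<noteq> 0"
  proof -
    have "\<not> (\<forall>k\<in>{..<m}. g k = 0)" using gs by (metis sum.neutral zero_neq_one)
    then show ?thesis using that by auto
  qed
  then have "card (bs!i) = 2" using gle[of i] pos unfolding g_def by fastforce
  then show "\<exists>i<m. card (bs!i) = 2" using i by blast
  show "\<forall>i<m. \<forall>j<m. card (bs!i) = 2 \<longrightarrow> j \<noteq> i \<longrightarrow> card (bs!j) = 1"
  proof (intro allI impI)
    fix i j assume "i < m" "j < m" "card (bs!i) = 2" "j \<noteq> i"
    moreover have "g j \<noteq> 1" using two[of i j] calculation unfolding g_def by auto
    ultimately show "card (bs!j) = 1" using gle[of j] pos unfolding g_def by fastforce
  qed
qed

definition Sset :: "nat \<Rightarrow> nat \<Rightarrow> nat set list set" where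
  "Sset n i = {bs. ordered_set_partition n bs \<and> length bs = n - 1 \<and> card (bs!i) = 2 \<and> \<not> contains3 bs}"

definition F :: "nat \<Rightarrow> nat set list \<Rightarrow> nat set list" where
  "F i bs = (let a = Min (bs!i); b = Max (bs!i); c = the_elem (bs!Suc i) in
     if a < c \<and> c < b then bs[i := {a}, Suc i := {b,c}] else bs[i := {b}, Suc i := {a,c}])"

definition G :: "nat \<Rightarrow> nat set list \<Rightarrow> nat set list" where
  "G i bs = (let x = the_elem (bs!i); y = Min (bs!Suc i); z = Max (bs!Suc i) in
     if x < y then bs[i := {x,z}, Suc i := {y}] else if x < z then bs[i := {x,y}, Suc i := {z}]
     else bs[i := {x,z}, Suc i := {y}])"

lemma F_expl: "bs!i = {a,b} \<Longrightarrow> a < b \<Longrightarrow> bs!Suc i = {c} \<Longrightarrow>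
  F i bs = (if a < c \<and> c < b then bs[i := {a}, Suc i := {b,c}] else bs[i := {b}, Suc i := {a,c}])"
  unfolding F_def Let_def by simp

lemma G_expl: "bs!i = {x} \<Longrightarrow> bs!Suc i = {y,z} \<Longrightarrow> y < z \<Longrightarrow>
  G i bs = (if x < y then bs[i := {x,z}, Suc i := {y}] else if x < z then bs[i := {x,y}, Suc i := {z}]
     else bs[i := {x,z}, Suc i := {y}])"
  unfolding G_def Let_def by simp

lemma two_elem: "card D = 2 \<Longrightarrow> \<exists>a b. a < b \<and> D = {a,(b::nat)}"
  by (auto simp: card_2_iff) (metis insert_commute linorder_neqE_nat)



lemma Sset_upd:
  assumes bs: "bs \<in> Sset n j" and si: "Suc i < length bs" and k: "k = i \<or> k = Suc i"
  and X: "X \<noteq> {}" and Y: "Y \<noteq> {}" and XYd: "X \<inter> Y = {}"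
  and XY: "X \<union> Y = bs!i \<union> bs!Suc i"
  and Q1: "\<forall>w. (\<exists>p\<in>bs!i. \<exists>q\<in>bs!Suc i. p<q \<and> w<p) \<longleftrightarrow> (\<exists>p\<in>X. \<exists>q\<in>Y. p<q \<and> w<p)"
  and Q2: "\<forall>w. (\<exists>p\<in>bs!i. \<exists>q\<in>bs!Suc i. p<q \<and> q<w) \<longleftrightarrow> (\<exists>p\<in>X. \<exists>q\<in>Y. p<q \<and> q<w)"
  and c: "card ((bs[i:=X, Suc i:=Y])!k) = 2"
  shows "bs[i:=X, Suc i:=Y] \<in> Sset n k"
  using window[OF _ si X Y XYd XY Q1 Q2] bs c unfolding Sset_def by auto

lemma F_in:
  assumes si: "Suc i < n - 1" and bs: "bs \<in> Sset n i"
  shows "F i bs \<in> Sset n (Suc i) \<and> G i (F i bs) = bs"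
proof -
  have osp: "ordered_set_partition n bs" and len: "length bs = n - 1" and c2: "card (bs!i) = 2"
    using bs unfolding Sset_def by auto
  have nn: "n = Suc (n - 1)" using si by auto
  have "card (bs!Suc i) = 1" using struct(2)[OF osp len nn, rule_format, of i "Suc i"] c2 si by auto
  then obtain c where c: "bs!Suc i = {c}" by (auto simp: card_1_singleton_iff)
  obtain a b where ab: "a < b" "bs!i = {a,b}" using two_elem[OF c2] by blast
  have "bs!i \<inter> bs!Suc i = {}" using osp len si unfolding ordered_set_partition_def by auto
  then have ca: "c \<noteq> a" "c \<noteq> b" using ab c by auto
  have silen: "Suc i < length bs" using si len by simp
  have Fe: "F i bs = (if a < c \<and> c < b then bs[i := {a}, Suc i := {b,c}] else bs[i := {b}, Suc i := {a,c}])"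
    using F_expl[OF ab(2) ab(1) c] .
  consider (m) "a < c \<and> c < b" | (hi) "b < c" | (lo) "c < a" using ca ab by linarith
  then show ?thesis
  proof cases
    case m
    have F: "F i bs = bs[i := {a}, Suc i := {b,c}]" using Fe m by simp
    have "bs[i := {a}, Suc i := {b,c}] \<in> Sset n (Suc i)"
      by (rule Sset_upd[OF bs silen]) (use m ab c ca silen in auto)
    moreover have "G i (bs[i := {a}, Suc i := {b,c}]) = bs"
    proof -
      have "G i (bs[i := {a}, Suc i := {b,c}]) = (bs[i := {a}, Suc i := {b,c}])[i := {a,b}, Suc i := {c}]"
        by (rule trans[OF G_expl[of _ _ a c b]]) (use m silen in \<open>auto simp: insert_commute\<close>)
      also have "\<dots> = bs" using ab c silen by (auto simp: list_eq_iff_nth_eq nth_list_update)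
      finally show ?thesis .
    qed
    ultimately show ?thesis using F by simp
  next
    case hi
    have F: "F i bs = bs[i := {b}, Suc i := {a,c}]" using Fe hi by auto
    have "bs[i := {b}, Suc i := {a,c}] \<in> Sset n (Suc i)"
      by (rule Sset_upd[OF bs silen]) (use hi ab c ca silen in auto)
    moreover have "G i (bs[i := {b}, Suc i := {a,c}]) = bs"
    proof -
      have "G i (bs[i := {b}, Suc i := {a,c}]) = (bs[i := {b}, Suc i := {a,c}])[i := {b,a}, Suc i := {c}]"
        by (rule trans[OF G_expl[of _ _ b a c]]) (use hi ab silen in \<open>auto simp: insert_commute\<close>)
      also have "\<dots> = bs" using ab c silen by (auto simp: list_eq_iff_nth_eq nth_list_update insert_commute)
      finally show ?thesis .
    qed
    ultimately show ?thesis using F by simp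
  next
    case lo
    have F: "F i bs = bs[i := {b}, Suc i := {a,c}]" using Fe lo by auto
    have "bs[i := {b}, Suc i := {a,c}] \<in> Sset n (Suc i)"
      by (rule Sset_upd[OF bs silen]) (use lo ab c ca silen in auto)
    moreover have "G i (bs[i := {b}, Suc i := {a,c}]) = bs"
    proof -
      have "G i (bs[i := {b}, Suc i := {a,c}]) = (bs[i := {b}, Suc i := {a,c}])[i := {b,a}, Suc i := {c}]"
        by (rule trans[OF G_expl[of _ _ b c a]]) (use lo ab silen in \<open>auto simp: insert_commute\<close>)
      also have "\<dots> = bs" using ab c silen by (auto simp: list_eq_iff_nth_eq nth_list_update insert_commute)
      finally show ?thesis .
    qed
    ultimately show ?thesis using F by simp
  qed
qed



lemma G_in:
  assumes si: "Suc i < n - 1" and bs: "bs \<in> Sset n (Suc i)"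
  shows "G i bs \<in> Sset n i \<and> F i (G i bs) = bs"
proof -
  have osp: "ordered_set_partition n bs" and len: "length bs = n - 1" and c2: "card (bs!Suc i) = 2"
    using bs unfolding Sset_def by auto
  have nn: "n = Suc (n - 1)" using si by auto
  have "card (bs!i) = 1" using struct(2)[OF osp len nn, rule_format, of "Suc i" i] c2 si by auto
  then obtain x where x: "bs!i = {x}" by (auto simp: card_1_singleton_iff)
  obtain y z where yz: "y < z" "bs!Suc i = {y,z}" using two_elem[OF c2] by blast
  have "bs!i \<inter> bs!Suc i = {}" using osp len si unfolding ordered_set_partition_def by auto
  then have xy: "x \<noteq> y" "x \<noteq> z" using yz x by auto
  have silen: "Suc i < length bs" using si len by simp
  have Ge: "G i bs = (if x < y then bs[i := {x,z}, Suc i := {y}] else if x < z then bs[i := {x,y}, Suc i := {z}]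
     else bs[i := {x,z}, Suc i := {y}])"
    using G_expl[OF x yz(2) yz(1)] .
  consider (lo) "x < y" | (m) "y < x \<and> x < z" | (hi) "z < x" using xy yz by linarith
  then show ?thesis
  proof cases
    case lo
    have G: "G i bs = bs[i := {x,z}, Suc i := {y}]" using Ge lo by simp
    have "bs[i := {x,z}, Suc i := {y}] \<in> Sset n i"
      by (rule Sset_upd[OF bs silen]) (use lo yz x xy silen in auto)
    moreover have "F i (bs[i := {x,z}, Suc i := {y}]) = bs"
    proof -
      have "F i (bs[i := {x,z}, Suc i := {y}]) = (bs[i := {x,z}, Suc i := {y}])[i := {x}, Suc i := {z,y}]"
        by (rule trans[OF F_expl[of _ _ x z y]]) (use lo yz silen in \<open>auto simp: insert_commute\<close>)
      also have "\<dots> = bs" using x yz silen by (auto simp: list_eq_iff_nth_eq nth_list_update insert_commute)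
      finally show ?thesis .
    qed
    ultimately show ?thesis using G by simp
  next
    case m
    have G: "G i bs = bs[i := {x,y}, Suc i := {z}]" using Ge m by auto
    have "bs[i := {x,y}, Suc i := {z}] \<in> Sset n i"
      by (rule Sset_upd[OF bs silen]) (use m yz x xy silen in auto)
    moreover have "F i (bs[i := {x,y}, Suc i := {z}]) = bs"
    proof -
      have "F i (bs[i := {x,y}, Suc i := {z}]) = (bs[i := {x,y}, Suc i := {z}])[i := {x}, Suc i := {y,z}]"
        by (rule trans[OF F_expl[of _ _ y x z]]) (use m yz silen in \<open>auto simp: insert_commute\<close>)
      also have "\<dots> = bs" using x yz silen by (auto simp: list_eq_iff_nth_eq nth_list_update insert_commute)
      finally show ?thesis .
    qed
    ultimately show ?thesis using G by simp
  next
    case hi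
    have G: "G i bs = bs[i := {x,z}, Suc i := {y}]" using Ge hi yz by auto
    have "bs[i := {x,z}, Suc i := {y}] \<in> Sset n i"
      by (rule Sset_upd[OF bs silen]) (use hi yz x xy silen in auto)
    moreover have "F i (bs[i := {x,z}, Suc i := {y}]) = bs"
    proof -
      have "F i (bs[i := {x,z}, Suc i := {y}]) = (bs[i := {x,z}, Suc i := {y}])[i := {x}, Suc i := {z,y}]"
        by (rule trans[OF F_expl[of _ _ z x y]]) (use hi yz silen in \<open>auto simp: insert_commute\<close>)
      also have "\<dots> = bs" using x yz silen by (auto simp: list_eq_iff_nth_eq nth_list_update insert_commute)
      finally show ?thesis .
    qed
    ultimately show ?thesis using G by simp
  qed
qed

lemma card_step: "Suc i < n - 1 \<Longrightarrow> card (Sset n i) = card (Sset n (Suc i))"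
  apply (rule bij_betw_same_card[of "F i"])
  apply (rule bij_betw_byWitness[of _ "G i"])
  using F_in G_in by blast+

lemma card_all: "i < n - 1 \<Longrightarrow> card (Sset n i) = card (Sset n 0)"
  by (induction i) (auto simp: card_step)



lemma osp_sub: "ordered_set_partition n bs \<Longrightarrow> set bs \<subseteq> Pow {1..n}"
  unfolding ordered_set_partition_def by blast

lemma fin_all: "finite {bs. ordered_set_partition n bs \<and> length bs = m}"
proof -
  have "finite {xs. set xs \<subseteq> Pow {1..n} \<and> length xs = m}"
    by (rule finite_lists_length_eq) simp
  then show ?thesis by (rule finite_subset[rotated]) (use osp_sub in blast)
qed

lemma avoids_iff: "op_avoids bs [1,2,3] = (\<not> contains3 bs)"
  by (simp only: op_avoids_def contains_iff)

lemma avoids_iff': "op_avoids bs [Suc 0,2,3] = (\<not> contains3 bs)"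
  using avoids_iff[unfolded One_nat_def] .

theorem corollary1:
  fixes n :: nat
  assumes "n \<ge> 2"
  shows "op_nk n (n - 1) [1, 2, 3] = (n - 1) * op_sizes (2 # replicate (n - 2) 1) [1, 2, 3]"
proof -
  have nn: "n = Suc (n - 1)" using assms by auto
  let ?T = "{bs. ordered_set_partition n bs \<and> length bs = n - 1 \<and> op_avoids bs [1,2,3]}"
  have T: "?T = (\<Union>i<n-1. Sset n i)"
  proof
    show "?T \<subseteq> (\<Union>i<n-1. Sset n i)"
    proof
      fix bs assume "bs \<in> ?T"
      then have h: "ordered_set_partition n bs" "length bs = n - 1" "\<not> contains3 bs"
        unfolding avoids_iff by blast+
      obtain i where "i < n - 1" "card (bs!i) = 2" using struct(1)[OF h(1) h(2) nn] by blast
      then show "bs \<in> (\<Union>i<n-1. Sset n i)" using h unfolding Sset_def by auto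
    qed
  next
    show "(\<Union>i<n-1. Sset n i) \<subseteq> ?T"
      unfolding Sset_def avoids_iff by blast
  qed
  have finS: "finite (Sset n i)" for i
    by (rule finite_subset[OF _ fin_all[of n "n-1"]]) (auto simp: Sset_def)
  have "card ?T = (\<Sum>i<n-1. card (Sset n i))"
    unfolding T
  proof (rule card_UN_disjoint)
    show "\<forall>i\<in>{..<n-1}. \<forall>j\<in>{..<n-1}. i \<noteq> j \<longrightarrow> Sset n i \<inter> Sset n j = {}"
    proof (intro ballI impI)
      fix i j assume ij: "i \<in> {..<n-1}" "j \<in> {..<n-1}" "i \<noteq> j"
      show "Sset n i \<inter> Sset n j = {}"
      proof (rule ccontr)
        assume "Sset n i \<inter> Sset n j \<noteq> {}"
        then obtain bs where "bs \<in> Sset n i" "bs \<in> Sset n j" by blast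
        then have h: "ordered_set_partition n bs" "length bs = n - 1" "card (bs!i) = 2" "card (bs!j) = 2"
          unfolding Sset_def by auto
        show False using struct(2)[OF h(1) h(2) nn, rule_format, of i j] h ij by auto
      qed
    qed
  qed (simp_all add: finS)
  also have "\<dots> = (\<Sum>i<n-1. card (Sset n 0))" by (rule sum.cong[OF refl]) (metis card_all lessThan_iff)
  also have "\<dots> = (n - 1) * card (Sset n 0)" by simp
  finally have 1: "op_nk n (n - 1) [1, 2, 3] = (n - 1) * card (Sset n 0)" unfolding op_nk_def .
  have sl: "sum_list (2 # replicate (n - 2) (1::nat)) = n" using assms by (simp add: sum_list_replicate)
  have ln: "length (2 # replicate (n - 2) (1::nat)) = n - 1" using assms by simp
  have "op_sizes (2 # replicate (n - 2) 1) [1, 2, 3] = card (Sset n 0)"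
    unfolding op_sizes_def sl ln
  proof (rule arg_cong[where f = card])
    show "{bs. ordered_set_partition n bs \<and> length bs = n - 1 \<and>
         (\<forall>i<n - 1. card (bs ! i) = (2 # replicate (n - 2) 1) ! i) \<and> op_avoids bs [1, 2, 3]} = Sset n 0"
    proof (rule set_eqI, rule iffI)
      fix bs assume "bs \<in> {bs. ordered_set_partition n bs \<and> length bs = n - 1 \<and>
         (\<forall>i<n - 1. card (bs ! i) = (2 # replicate (n - 2) 1) ! i) \<and> op_avoids bs [1, 2, 3]}"
      then have h: "ordered_set_partition n bs" "length bs = n - 1"
         "\<forall>i<n - 1. card (bs ! i) = (2 # replicate (n - 2) 1) ! i" "op_avoids bs [1, 2, 3]" by blast+
      have "card (bs!0) = 2" using h(3)[rule_format, of 0] assms by simp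
      then show "bs \<in> Sset n 0" using h(1,2,4) unfolding Sset_def avoids_iff by blast
    next
      fix bs assume "bs \<in> Sset n 0"
      then have h: "ordered_set_partition n bs" "length bs = n - 1" "card (bs!0) = 2" "\<not> contains3 bs"
        unfolding Sset_def by auto
      have "\<forall>i<n - 1. card (bs ! i) = (2 # replicate (n - 2) 1) ! i"
      proof (intro allI impI)
        fix i assume i: "i < n - 1"
        show "card (bs ! i) = (2 # replicate (n - 2) 1) ! i"
        proof (cases i)
          case 0 then show ?thesis using h by simp
        next
          case (Suc k)
          have "card (bs!i) = 1" using struct(2)[OF h(1) h(2) nn, rule_format, of 0 i] h i Suc by auto
          then show ?thesis using Suc i by simp
        qed
      qed
      then show "bs \<in> {bs. ordered_set_partition n bs \<and> length bs = n - 1 \<and>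
         (\<forall>i<n - 1. card (bs ! i) = (2 # replicate (n - 2) 1) ! i) \<and> op_avoids bs [1, 2, 3]}"
        using h unfolding avoids_iff by blast
    qed
  qed
  then show ?thesis using 1 by simp
qed


end
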